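(* Consider the symmetric two-player two-action game with payoffs $a/a$ for (1,1), $b/c$ for (1,2), $c/b$ for (2,1), $d/d$ for (2,2), satisfying the Prisoner's Dilemma condition $c>a>d>b$. Then the projected SA-IGA self-play dynamics on $[0,1]^4$ in the variables $(p_1,p_2,w_1,w_2)$ has two types of stable equilibrium points: (1) $(0,0,w_1^*,w_2^* )$, whenever $w_1^*,w_2^*\in[0,1]$ and $w_1^*,w_2^*<\min\left\{\frac{2(c-a)}{c-b},\frac{2(d-b)}{c-b}\right\}$; (2) $(1,1,w_1^*,w_2^* )$, whenever $w_1^*,w_2^*\in[0,1]$ and $w_1^*,w_2^*>\max\left\{\frac{2(c-a)}{c-b},\frac{2(d-b)}{c-b}\right\}$.
   Context: Player $i\in\{1,2\}$ plays action 1 with probability $p_i\in[0,1]$. With $r_i^{11}=a,r_i^{12}=b,r_i^{21}=c,r_i^{22}=d$ (payoff to $i$ when $i$ plays the first index and the opponent $-i$ the second), the expected payoff is $V_i=\sum_{j,k}\pi_i(j)\pi_{-i}(k)r_i^{jk}$ with $\pi_i(1)=p_i,\pi_i(2)=1-p_i$; $V^{soc}=\frac12(V_1+V_2)$; player $i$'s overall payoff is $\tilde V_i=(1-w_i)V_i+w_iV^{soc}$ with social attitude $w_i\in[0,1]$. The unconstrained SA-IGA vector field $F$ on $x=(p_1,p_2,w_1,w_2)$ is $F_{p_i}=\partial\tilde V_i/\partial p_i$ and $F_{w_i}=\varepsilon(V_i-V^{soc})$ for a constant $\varepsilon>0$; for this game $F_{p_i}=u\,p_{-i}+\frac{c-b}{2}w_i+b-d$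 with $u=a+d-b-c$, and $F_{w_i}=\frac{\varepsilon}{2}(b-c)(p_i-p_{-i})$. The projected dynamics on $[0,1]^4$ is $\dot x_j=F_j(x)$ for each coordinate, except that $\dot x_j=0$ whenever $x_j=0$ and $F_j(x)<0$, or $x_j=1$ and $F_j(x)>0$. An equilibrium point is a point where the projected vector field vanishes; it is stable if for every $\eta>0$ there is $\delta>0$ such that every trajectory starting within distance $\delta$ of it stays within distance $\eta$ of it for all future time. *)

theory Defs
  imports "HOL-Analysis.Analysis"
begin

text \<open>State x = (p1, p2, w1, w2) in real \<times> real \<times> real \<times> real (Euclidean distance).
  Symmetric game: r^11 = a, r^12 = b, r^21 = c, r^22 = d for both players.\<close>

type_synonym state = "real \<times> real \<times> real \<times> real"

definition sa_box :: "state set" where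
  "sa_box = {0..1} \<times> {0..1} \<times> {0..1} \<times> {0..1}"

definition sa_F :: "real \<Rightarrow> real \<Rightarrow> real \<Rightarrow> real \<Rightarrow> real \<Rightarrow> state \<Rightarrow> state" where
  "sa_F a b c d eps x = (case x of (p1, p2, w1, w2) \<Rightarrow>
     let u = a + d - b - c in
     (u * p2 + (c - b) / 2 * w1 + b - d,
      u * p1 + (c - b) / 2 * w2 + b - d,
      eps / 2 * (b - c) * (p1 - p2),
      eps / 2 * (b - c) * (p2 - p1)))"

definition clip :: "real \<Rightarrow> real \<Rightarrow> real" where
  "clip y f = (if (y = 0 \<and> f < 0) \<or> (y = 1 \<and> f > 0) then 0 else f)"

definition sa_PF :: "real \<Rightarrow> real \<Rightarrow> real \<Rightarrow> real \<Rightarrow> real \<Rightarrow> state \<Rightarrow> state" where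
  "sa_PF a b c d eps x = (case x of (p1, p2, w1, w2) \<Rightarrow>
     (case sa_F a b c d eps x of (f1, f2, f3, f4) \<Rightarrow>
       (clip p1 f1, clip p2 f2, clip w1 f3, clip w2 f4)))"

definition sa_trajectory :: "real \<Rightarrow> real \<Rightarrow> real \<Rightarrow> real \<Rightarrow> real \<Rightarrow> (real \<Rightarrow> state) \<Rightarrow> bool" where
  "sa_trajectory a b c d eps x \<longleftrightarrow>
     (\<forall>t\<ge>0. x t \<in> sa_box) \<and> continuous_on {0..} x \<and>
     (\<forall>t\<ge>0. (x has_vector_derivative sa_PF a b c d eps (x t)) (at t within {t..}))"

definition sa_equilibrium :: "real \<Rightarrow> real \<Rightarrow> real \<Rightarrow> real \<Rightarrow> real \<Rightarrow> state \<Rightarrow> bool" where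
  "sa_equilibrium a b c d eps xs \<longleftrightarrow> xs \<in> sa_box \<and> sa_PF a b c d eps xs = 0"

definition sa_stable :: "real \<Rightarrow> real \<Rightarrow> real \<Rightarrow> real \<Rightarrow> real \<Rightarrow> state \<Rightarrow> bool" where
  "sa_stable a b c d eps xs \<longleftrightarrow>
     (\<forall>\<eta>>0. \<exists>\<delta>>0. \<forall>x. sa_trajectory a b c d eps x \<and> dist (x 0) xs < \<delta> \<longrightarrow>
        (\<forall>t\<ge>0. dist (x t) xs < \<eta>))"

end

theory Submission
  imports Defs
begin

lemma mono_right:
  fixes f f' :: "real \<Rightarrow> real"
  assumes ab: "a \<le> b" and cont: "continuous_on {a..b} f"
    and der: "\<And>t. a \<le> t \<Longrightarrow> t < b \<Longrightarrow> (f has_real_derivative f' t) (at t within {t..})"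
    and neg: "\<And>t. a \<le> t \<Longrightarrow> t < b \<Longrightarrow> f' t \<le> 0"
  shows "f b \<le> f a"
proof (rule ccontr)
  assume "\<not> f b \<le> f a"
  then have gt: "f b > f a" by simp
  have ab': "a < b" using ab gt by (cases "a = b") auto
  define e where "e = (f b - f a) / (2*(b-a))"
  have e: "e > 0" using gt ab' by (simp add: e_def)
  define g where "g t = f t - f a - e*(t-a)" for t
  have "b - a \<noteq> 0" using ab' by simp
  then have "e*(b-a) = (f b - f a)/2"
    unfolding e_def by (simp add: divide_simps)
  then have gb: "g b > 0" using gt by (simp add: g_def)
  have gcont: "continuous_on {a..b} g" unfolding g_def
    by (intro continuous_intros cont)
  define Z where "Z = {t \<in> {a..b}. g t \<le> (\<lambda>_. 0) t}"
  have "closed Z" unfolding Z_def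
    by (rule continuous_on_closed_Collect_le[OF gcont continuous_on_const closed_atLeastAtMost])
  moreover have "bounded Z" unfolding Z_def
    by (rule bounded_subset[OF bounded_closed_interval[of a b]]) (auto simp: Z_def)
  ultimately have "compact Z" by (simp add: compact_eq_bounded_closed)
  moreover have "a \<in> Z" using ab by (simp add: Z_def g_def)
  ultimately obtain m where mZ: "m \<in> Z" and mmax: "\<And>y. y \<in> Z \<Longrightarrow> y \<le> m"
    using compact_attains_sup[of Z] by blast
  have gm: "g m \<le> 0" and am: "a \<le> m" and mb: "m \<le> b" using mZ by (auto simp: Z_def)
  have mb': "m < b" using mb gm gb by (cases "m = b") auto
  have "((\<lambda>y. (f y - f m) / (y - m)) \<longlongrightarrow> f' m) (at m within {m..})"
    using der[OF am mb'] by (simp add: has_field_derivative_iff)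
  moreover have "f' m < f' m + e" using e by simp
  ultimately have "eventually (\<lambda>y. (f y - f m) / (y - m) < f' m + e) (at m within {m..})"
    by (rule order_tendstoD(2))
  then obtain d where d: "d > 0" and
    dP: "\<And>y. y \<in> {m..} \<Longrightarrow> y \<noteq> m \<Longrightarrow> dist y m < d \<Longrightarrow> (f y - f m) / (y - m) < f' m + e"
    unfolding eventually_at by blast
  obtain h where hh: "h > 0" "h \<le> d" "h \<le> b - m"
    using d mb' by (intro that[of "min d (b - m)"]) auto
  define y where "y = m + h / 2"
  have ym: "y > m" using hh unfolding y_def by linarith
  have yb: "y \<le> b" using hh unfolding y_def by linarith
  have yd: "dist y m < d" using hh unfolding y_def dist_real_def by simp
  have "(f y - f m) / (y - m) < f' m + e" using dP[of y] ym yd by auto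
  then have "(f y - f m) / (y - m) < e" using neg[OF am mb'] by simp
  then have "f y - f m < e * (y - m)" using ym by (simp add: divide_less_eq)
  then have "g y < g m" by (simp add: g_def algebra_simps)
  then have "y \<in> Z" using gm am ym yb by (simp add: Z_def)
  then have "y \<le> m" by (rule mmax)
  then show False using ym by simp
qed

lemma core:
  fixes Q1 Q2 W1 W2 dQ1 dQ2 dW1 dW2 :: "real \<Rightarrow> real"
  assumes c1: "continuous_on {0..} Q1" and c2: "continuous_on {0..} Q2"
    and c3: "continuous_on {0..} W1" and c4: "continuous_on {0..} W2"
    and d1: "\<And>t. t \<ge> 0 \<Longrightarrow> (Q1 has_real_derivative dQ1 t) (at t within {t..})"
    and d2: "\<And>t. t \<ge> 0 \<Longrightarrow> (Q2 has_real_derivative dQ2 t) (at t within {t..})"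
    and d3: "\<And>t. t \<ge> 0 \<Longrightarrow> (W1 has_real_derivative dW1 t) (at t within {t..})"
    and d4: "\<And>t. t \<ge> 0 \<Longrightarrow> (W2 has_real_derivative dW2 t) (at t within {t..})"
    and n1: "\<And>t. t \<ge> 0 \<Longrightarrow> 0 \<le> Q1 t \<and> Q1 t \<le> 1"
    and n2: "\<And>t. t \<ge> 0 \<Longrightarrow> 0 \<le> Q2 t \<and> Q2 t \<le> 1"
    and kp: "\<kappa> > 0" and L: "L \<ge> 0"
    and reg: "\<And>t. t \<ge> 0 \<Longrightarrow> Q1 t \<le> \<rho> \<Longrightarrow> Q2 t \<le> \<rho> \<Longrightarrow> \<bar>W1 t - v1\<bar> \<le> \<rho> \<Longrightarrow> \<bar>W2 t - v2\<bar> \<le> \<rho> \<Longrightarrow>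
       dQ1 t \<le> 0 \<and> (Q1 t > 0 \<longrightarrow> dQ1 t \<le> - \<kappa>) \<and> dQ2 t \<le> 0 \<and> (Q2 t > 0 \<longrightarrow> dQ2 t \<le> - \<kappa>) \<and>
       \<bar>dW1 t\<bar> \<le> L * (Q1 t + Q2 t) \<and> \<bar>dW2 t\<bar> \<le> L * (Q1 t + Q2 t)"
    and i1: "(2 * L / \<kappa> + 1) * (Q1 0 + Q2 0) + \<bar>W1 0 - v1\<bar> < \<rho>"
    and i2: "(2 * L / \<kappa> + 1) * (Q1 0 + Q2 0) + \<bar>W2 0 - v2\<bar> < \<rho>"
  shows "\<forall>t\<ge>0. Q1 t < \<rho> \<and> Q2 t < \<rho> \<and> \<bar>W1 t - v1\<bar> < \<rho> \<and> \<bar>W2 t - v2\<bar> < \<rho>"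
proof (rule ccontr)
  assume "\<not> ?thesis"
  then obtain t0 where t0: "t0 \<ge> 0" and
    bad: "\<not> (Q1 t0 < \<rho> \<and> Q2 t0 < \<rho> \<and> \<bar>W1 t0 - v1\<bar> < \<rho> \<and> \<bar>W2 t0 - v2\<bar> < \<rho>)" by blast
  define M where "M = 2 * L / \<kappa>"
  have M0: "M \<ge> 0" using L kp by (simp add: M_def)
  have MK: "M * \<kappa> = 2 * L" using kp by (simp add: M_def)
  define S where "S t = Q1 t + Q2 t" for t
  have S0: "S 0 \<ge> 0" using n1[of 0] n2[of 0] by (simp add: S_def)
  have sub: "{0..t0} \<subseteq> {0..}" by auto
  have cc1: "continuous_on {0..t0} Q1" using c1 sub by (rule continuous_on_subset)
  have cc2: "continuous_on {0..t0} Q2" using c2 sub by (rule continuous_on_subset)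
  have cc3: "continuous_on {0..t0} W1" using c3 sub by (rule continuous_on_subset)
  have cc4: "continuous_on {0..t0} W2" using c4 sub by (rule continuous_on_subset)
  define Z where "Z = {t \<in> {0..t0}. \<rho> \<le> Q1 t} \<union> {t \<in> {0..t0}. \<rho> \<le> Q2 t} \<union>
      {t \<in> {0..t0}. \<rho> \<le> \<bar>W1 t - v1\<bar>} \<union> {t \<in> {0..t0}. \<rho> \<le> \<bar>W2 t - v2\<bar>}"
  have "closed Z" unfolding Z_def
    by (intro closed_Un continuous_on_closed_Collect_le continuous_on_const closed_atLeastAtMost
        cc1 cc2 cc3 cc4 continuous_on_rabs continuous_on_diff)
  moreover have "bounded Z"
    by (rule bounded_subset[OF bounded_closed_interval[of 0 t0]]) (auto simp: Z_def)
  ultimately have "compact Z" by (simp add: compact_eq_bounded_closed)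
  moreover have "t0 \<in> Z" using t0 bad by (auto simp: Z_def)
  ultimately obtain m where mZ: "m \<in> Z" and mmin: "\<And>y. y \<in> Z \<Longrightarrow> m \<le> y"
    using compact_attains_inf[of Z] by blast
  have m0: "0 \<le> m" and mt0: "m \<le> t0" using mZ by (auto simp: Z_def)
  have good: "Q1 s \<le> \<rho> \<and> Q2 s \<le> \<rho> \<and> \<bar>W1 s - v1\<bar> \<le> \<rho> \<and> \<bar>W2 s - v2\<bar> \<le> \<rho>"
    if "0 \<le> s" "s < m" for s
  proof -
    have "s \<notin> Z" using mmin[of s] that by auto
    then show ?thesis using that mt0 by (auto simp: Z_def)
  qed
  have cm: "{0..m} \<subseteq> {0..}" by auto
  have Sder: "dQ1 s + dQ2 s \<le> 0" and Sneg: "S s > 0 \<Longrightarrow> dQ1 s + dQ2 s \<le> - \<kappa>"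
    and Wb1: "\<bar>dW1 s\<bar> \<le> L * S s" and Wb2: "\<bar>dW2 s\<bar> \<le> L * S s"
    if "0 \<le> s" "s < m" for s
  proof -
    have r: "dQ1 s \<le> 0 \<and> (Q1 s > 0 \<longrightarrow> dQ1 s \<le> - \<kappa>) \<and> dQ2 s \<le> 0 \<and> (Q2 s > 0 \<longrightarrow> dQ2 s \<le> - \<kappa>) \<and>
       \<bar>dW1 s\<bar> \<le> L * (Q1 s + Q2 s) \<and> \<bar>dW2 s\<bar> \<le> L * (Q1 s + Q2 s)"
      using reg[OF that(1)] good[OF that] by blast
    show "dQ1 s + dQ2 s \<le> 0" using r by linarith
    show "S s > 0 \<Longrightarrow> dQ1 s + dQ2 s \<le> - \<kappa>"
      using r n1[OF that(1)] n2[OF that(1)] unfolding S_def by linarith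
    show "\<bar>dW1 s\<bar> \<le> L * S s" "\<bar>dW2 s\<bar> \<le> L * S s" using r unfolding S_def by auto
  qed
  have key: "dW s + M * (dQ1 s + dQ2 s) \<le> 0"
    if "0 \<le> s" "s < m" "\<bar>dW s\<bar> \<le> L * S s" for s and dW :: "real \<Rightarrow> real"
  proof (cases "S s > 0")
    case True
    have "M * (dQ1 s + dQ2 s) \<le> M * (- \<kappa>)"
      using Sneg[OF that(1,2) True] M0 by (rule mult_left_mono)
    moreover have "S s \<le> 2" using n1[OF that(1)] n2[OF that(1)] by (simp add: S_def)
    then have "L * S s \<le> L * 2" using L by (rule mult_left_mono)
    ultimately show ?thesis using that(3) MK by linarith
  next
    case False
    then have "S s = 0" using n1[OF that(1)] n2[OF that(1)] by (simp add: S_def)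
    then have "dW s = 0" using that(3) by simp
    moreover have "M * (dQ1 s + dQ2 s) \<le> 0"
      using Sder[OF that(1,2)] M0 by (simp add: mult_nonneg_nonpos)
    ultimately show ?thesis by simp
  qed
  have Sd: "(S has_real_derivative dQ1 s + dQ2 s) (at s within {s..})" if "s \<ge> 0" for s
    unfolding S_def by (intro DERIV_add d1 d2 that)
  have cS: "continuous_on {0..m} S"
    unfolding S_def by (intro continuous_on_add continuous_on_subset[OF c1 cm] continuous_on_subset[OF c2 cm])
  have Sm: "S m \<le> S 0"
    by (rule mono_right[OF m0 cS Sd Sder]) auto
  have A1: "W1 m + M * S m \<le> W1 0 + M * S 0"
    by (rule mono_right[where f = "\<lambda>t. W1 t + M * S t", OF m0 _ _ key[where dW = dW1]])
       (auto intro!: continuous_on_add continuous_on_mult continuous_on_const cS continuous_on_subset[OF c3 cm]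
          DERIV_add DERIV_cmult d3 Sd Wb1)
  have A2: "- W1 m + M * S m \<le> - W1 0 + M * S 0"
    by (rule mono_right[where f = "\<lambda>t. - W1 t + M * S t", OF m0 _ _ key[where dW = "\<lambda>t. - dW1 t"]])
       (auto intro!: continuous_on_add continuous_on_mult continuous_on_const cS continuous_on_minus continuous_on_diff continuous_on_subset[OF c3 cm]
          DERIV_add DERIV_diff DERIV_cmult DERIV_minus d3 Sd Wb1)
  have A3: "W2 m + M * S m \<le> W2 0 + M * S 0"
    by (rule mono_right[where f = "\<lambda>t. W2 t + M * S t", OF m0 _ _ key[where dW = dW2]])
       (auto intro!: continuous_on_add continuous_on_mult continuous_on_const cS continuous_on_subset[OF c4 cm]
          DERIV_add DERIV_cmult d4 Sd Wb2)
  have A4: "- W2 m + M * S m \<le> - W2 0 + M * S 0"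
    by (rule mono_right[where f = "\<lambda>t. - W2 t + M * S t", OF m0 _ _ key[where dW = "\<lambda>t. - dW2 t"]])
       (auto intro!: continuous_on_add continuous_on_mult continuous_on_const cS continuous_on_minus continuous_on_diff continuous_on_subset[OF c4 cm]
          DERIV_add DERIV_diff DERIV_cmult DERIV_minus d4 Sd Wb2)
  have Sm0: "S m \<ge> 0" using n1[OF m0] n2[OF m0] by (simp add: S_def)
  have MS: "M * S m \<ge> 0" using M0 Sm0 by simp
  have ii1: "(M + 1) * S 0 + \<bar>W1 0 - v1\<bar> < \<rho>" using i1 by (simp add: M_def S_def)
  have ii2: "(M + 1) * S 0 + \<bar>W2 0 - v2\<bar> < \<rho>" using i2 by (simp add: M_def S_def)
  have e1: "(M + 1) * S 0 = M * S 0 + S 0" by (simp add: algebra_simps)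
  have MS0: "M * S 0 \<ge> 0" using M0 S0 by simp
  have "Q1 m < \<rho>" using Sm ii1 e1 MS0 n2[OF m0] unfolding S_def by linarith
  moreover have "Q2 m < \<rho>" using Sm ii1 e1 MS0 n1[OF m0] unfolding S_def by linarith
  moreover have "\<bar>W1 m - v1\<bar> < \<rho>" using A1 A2 ii1 e1 MS S0 by linarith
  moreover have "\<bar>W2 m - v2\<bar> < \<rho>" using A3 A4 ii2 e1 MS S0 by linarith
  ultimately have "m \<notin> Z" by (auto simp: Z_def)
  then show False using mZ by simp
qed

lemma vd_fst: "(x has_vector_derivative v) F \<Longrightarrow> ((\<lambda>t. fst (x t)) has_real_derivative fst v) F"
  unfolding has_real_derivative_iff_has_vector_derivative has_vector_derivative_def
  by (drule has_derivative_fst) simp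

lemma vd_snd: "(x has_vector_derivative v) F \<Longrightarrow> ((\<lambda>t. snd (x t)) has_vector_derivative snd v) F"
  unfolding has_vector_derivative_def
  by (drule has_derivative_snd) simp

lemma vd_sndr: "(x has_vector_derivative v) F \<Longrightarrow> ((\<lambda>t. snd (x t)) has_real_derivative snd v) F"
  for x :: "real \<Rightarrow> 'a::real_normed_vector \<times> real"
  unfolding has_real_derivative_iff_has_vector_derivative by (rule vd_snd)

lemma PF_eq: "sa_PF a b c d eps (p1, p2, w1, w2) =
  (clip p1 ((a + d - b - c) * p2 + (c - b) / 2 * w1 + b - d),
   clip p2 ((a + d - b - c) * p1 + (c - b) / 2 * w2 + b - d),
   clip w1 (eps / 2 * (b - c) * (p1 - p2)), clip w2 (eps / 2 * (b - c) * (p2 - p1)))"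
  by (simp add: sa_PF_def sa_F_def Let_def)

lemma clip_abs: "\<bar>clip y f\<bar> \<le> \<bar>f\<bar>"
  by (simp add: clip_def)

lemma clip_neg: "f \<le> - \<kappa> \<Longrightarrow> \<kappa> > 0 \<Longrightarrow> clip y f \<le> 0 \<and> (y > 0 \<longrightarrow> clip y f \<le> - \<kappa>)"
  by (auto simp: clip_def)

lemma clip_pos: "f \<ge> \<kappa> \<Longrightarrow> \<kappa> > 0 \<Longrightarrow> y \<le> 1 \<Longrightarrow> - clip y f \<le> 0 \<and> (1 - y > 0 \<longrightarrow> - clip y f \<le> - \<kappa>)"
  by (auto simp: clip_def)

lemma Fneg:
  fixes u k p W w e \<rho> \<kappa> :: real
  assumes "0 \<le> p" "p \<le> \<rho>" "W \<le> w + \<rho>" "k > 0" "(\<bar>u\<bar> + k) * \<rho> \<le> \<kappa>" "k * w + e \<le> - 2 * \<kappa>"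
  shows "u * p + k * W + e \<le> - \<kappa>"
proof -
  have "u * p \<le> \<bar>u\<bar> * p" by (simp add: abs_ge_self assms(1) mult_right_mono)
  also have "\<dots> \<le> \<bar>u\<bar> * \<rho>" using assms(2) by (simp add: mult_left_mono)
  finally have 1: "u * p \<le> \<bar>u\<bar> * \<rho>" .
  have 2: "k * W \<le> k * w + k * \<rho>" using assms(3,4) by (simp add: distrib_left[symmetric] mult_left_mono)
  have "(\<bar>u\<bar> + k) * \<rho> = \<bar>u\<bar> * \<rho> + k * \<rho>" by (simp add: algebra_simps)
  then show ?thesis using 1 2 assms(5,6) by linarith
qed

lemma Fpos:
  fixes u k p W w e \<rho> \<kappa> :: real
  assumes "0 \<le> 1 - p" "1 - p \<le> \<rho>" "w - \<rho> \<le> W" "k > 0" "(\<bar>u\<bar> + k) * \<rho> \<le> \<kappa>" "u + k * w + e \<ge> 2 * \<kappa>"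
  shows "u * p + k * W + e \<ge> \<kappa>"
proof -
  have "u * (1 - p) \<le> \<bar>u\<bar> * (1 - p)" using assms(1) by (intro mult_right_mono) simp_all
  then have "- (u * (1 - p)) \<ge> - (\<bar>u\<bar> * (1 - p))" by simp
  moreover have "\<bar>u\<bar> * (1 - p) \<le> \<bar>u\<bar> * \<rho>" using assms(2) by (simp add: mult_left_mono)
  moreover have "u * p = u - u * (1 - p)" by (simp add: algebra_simps)
  ultimately have 1: "u * p \<ge> u - \<bar>u\<bar> * \<rho>" by linarith
  have 2: "k * W \<ge> k * w - k * \<rho>" using assms(3,4) by (simp add: right_diff_distrib[symmetric] mult_left_mono)
  have "(\<bar>u\<bar> + k) * \<rho> = \<bar>u\<bar> * \<rho> + k * \<rho>" by (simp add: algebra_simps)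
  then show ?thesis using 1 2 assms(5,6) by linarith
qed

lemma Wbound:
  fixes eps b c z s :: real
  assumes "eps > 0" "b < c" "\<bar>z\<bar> \<le> s"
  shows "\<bar>clip y (eps / 2 * (b - c) * z)\<bar> \<le> eps * (c - b) / 2 * s"
proof -
  have "\<bar>eps / 2 * (b - c) * z\<bar> = eps * (c - b) / 2 * \<bar>z\<bar>" using assms(1,2) by (simp add: abs_mult)
  also have "\<dots> \<le> eps * (c - b) / 2 * s" using assms by (simp add: mult_left_mono)
  finally show ?thesis using clip_abs order_trans by blast
qed

lemma dist_pair_le: "dist (a, b) (c, d) \<le> dist a c + dist b d"
  using sqrt_sum_squares_le_sum_abs[of "dist a c" "dist b d"] by (simp add: dist_Pair_Pair)

lemma dist4: "dist (a1, a2, a3, a4) (b1, b2, b3, b4 :: real) \<le> \<bar>a1 - b1\<bar> + \<bar>a2 - b2\<bar> + \<bar>a3 - b3\<bar> + \<bar>a4 - b4\<bar>"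
proof -
  have "dist (a1, a2, a3, a4) (b1, b2, b3, b4) \<le> dist a1 b1 + dist (a2, a3, a4) (b2, b3, b4)" by (rule dist_pair_le)
  also have "dist (a2, a3, a4) (b2, b3, b4) \<le> dist a2 b2 + dist (a3, a4) (b3, b4)" by (rule dist_pair_le)
  also have "dist (a3, a4) (b3, b4) \<le> dist a3 b3 + dist a4 b4" by (rule dist_pair_le)
  finally show ?thesis by (simp add: dist_real_def add.assoc)
qed

lemma stable1:
  fixes a b c d eps w1 w2 :: real
  assumes bc: "b < c" and eps: "eps > 0"
    and h1: "(c - b) / 2 * w1 + b - d < 0" and h2: "(c - b) / 2 * w2 + b - d < 0"
  shows "sa_stable a b c d eps (0, 0, w1, w2)"
  unfolding sa_stable_def
proof (intro allI impI)
  fix \<eta> :: real assume eta: "\<eta> > 0"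
  define k where "k = (c - b) / 2"
  define u where "u = a + d - b - c"
  define \<kappa> where "\<kappa> = min (-(k * w1 + b - d)) (-(k * w2 + b - d)) / 2"
  define \<rho> where "\<rho> = min (\<eta> / 4) (\<kappa> / (\<bar>u\<bar> + k))"
  define L where "L = eps * (c - b) / 2"
  define M where "M = 2 * L / \<kappa> + 1"
  define \<delta> where "\<delta> = \<rho> / (2 * M + 2)"
  have k0: "k > 0" using bc by (simp add: k_def)
  have kp: "\<kappa> > 0" using h1 h2 by (simp add: \<kappa>_def k_def)
  have L0: "L \<ge> 0" using eps bc by (simp add: L_def)
  have "2 * L / \<kappa> \<ge> 0" using L0 kp by simp
  then have M0: "M > 0" unfolding M_def by linarith
  have uk: "\<bar>u\<bar> + k > 0" using k0 by linarith
  have rho0: "\<rho> > 0" using eta kp uk by (simp add: \<rho>_def)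
  have rho_eta: "4 * \<rho> \<le> \<eta>" by (simp add: \<rho>_def)
  have rho_k: "(\<bar>u\<bar> + k) * \<rho> \<le> \<kappa>"
  proof -
    have "\<rho> \<le> \<kappa> / (\<bar>u\<bar> + k)" by (simp add: \<rho>_def)
    then show ?thesis using uk by (simp add: pos_le_divide_eq mult.commute)
  qed
  have kw1: "k * w1 + (b - d) \<le> - 2 * \<kappa>" by (simp add: \<kappa>_def k_def)
  have kw2: "k * w2 + (b - d) \<le> - 2 * \<kappa>" by (simp add: \<kappa>_def k_def)
  have delta0: "\<delta> > 0" using rho0 M0 by (simp add: \<delta>_def)
  have dM: "M * (2 * \<delta>) + \<delta> < \<rho>"
  proof -
    have "\<delta> * (2 * M + 2) = \<rho>" using M0 by (simp add: \<delta>_def)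
    then show ?thesis using delta0 by (simp add: algebra_simps)
  qed
  show "\<exists>\<delta>>0. \<forall>x. sa_trajectory a b c d eps x \<and> dist (x 0) (0, 0, w1, w2) < \<delta> \<longrightarrow>
          (\<forall>t\<ge>0. dist (x t) (0, 0, w1, w2) < \<eta>)"
  proof (intro exI[of _ \<delta>] conjI allI impI delta0)
    fix x :: "real \<Rightarrow> state" and t :: real
    assume as: "sa_trajectory a b c d eps x \<and> dist (x 0) (0, 0, w1, w2) < \<delta>" and t: "t \<ge> 0"
    define P1 where "P1 t = fst (x t)" for t
    define P2 where "P2 t = fst (snd (x t))" for t
    define W1 where "W1 t = fst (snd (snd (x t)))" for t
    define W2 where "W2 t = snd (snd (snd (x t)))" for t
    define pf where "pf t = sa_PF a b c d eps (x t)" for t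
    have xt: "x t = (P1 t, P2 t, W1 t, W2 t)" for t by (simp add: P1_def P2_def W1_def W2_def)
    have box: "\<And>t. t \<ge> 0 \<Longrightarrow> x t \<in> sa_box" and cx: "continuous_on {0..} x"
      and dx: "\<And>t. t \<ge> 0 \<Longrightarrow> (x has_vector_derivative pf t) (at t within {t..})"
      using as unfolding sa_trajectory_def pf_def by auto
    have inb: "0 \<le> P1 t \<and> P1 t \<le> 1 \<and> 0 \<le> P2 t \<and> P2 t \<le> 1" if "t \<ge> 0" for t
      using box[OF that] unfolding xt sa_box_def by auto
    have pft: "pf t = (clip (P1 t) (u * P2 t + k * W1 t + (b - d)), clip (P2 t) (u * P1 t + k * W2 t + (b - d)),
       clip (W1 t) (eps / 2 * (b - c) * (P1 t - P2 t)), clip (W2 t) (eps / 2 * (b - c) * (P2 t - P1 t)))" for t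
      unfolding pf_def xt PF_eq u_def k_def by (simp add: algebra_simps)
    have cP1: "continuous_on {0..} P1" unfolding P1_def by (intro continuous_intros cx)
    have cP2: "continuous_on {0..} P2" unfolding P2_def by (intro continuous_intros cx)
    have cW1: "continuous_on {0..} W1" unfolding W1_def by (intro continuous_intros cx)
    have cW2: "continuous_on {0..} W2" unfolding W2_def by (intro continuous_intros cx)
    have dP1: "(P1 has_real_derivative fst (pf t)) (at t within {t..})" if "t \<ge> 0" for t
      unfolding P1_def using dx[OF that] by (rule vd_fst)
    have dP2: "(P2 has_real_derivative fst (snd (pf t))) (at t within {t..})" if "t \<ge> 0" for t
      unfolding P2_def using vd_snd[OF dx[OF that]] by (rule vd_fst)
    have dW1: "(W1 has_real_derivative fst (snd (snd (pf t)))) (at t within {t..})" if "t \<ge> 0" for t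
      unfolding W1_def using vd_snd[OF vd_snd[OF dx[OF that]]] by (rule vd_fst)
    have dW2: "(W2 has_real_derivative snd (snd (snd (pf t)))) (at t within {t..})" if "t \<ge> 0" for t
      unfolding W2_def using vd_snd[OF vd_snd[OF dx[OF that]]] by (rule vd_sndr)
    have reg: "fst (pf t) \<le> 0 \<and> (P1 t > 0 \<longrightarrow> fst (pf t) \<le> - \<kappa>) \<and>
        fst (snd (pf t)) \<le> 0 \<and> (P2 t > 0 \<longrightarrow> fst (snd (pf t)) \<le> - \<kappa>) \<and>
        \<bar>fst (snd (snd (pf t)))\<bar> \<le> L * (P1 t + P2 t) \<and> \<bar>snd (snd (snd (pf t)))\<bar> \<le> L * (P1 t + P2 t)"
      if "t \<ge> 0" "P1 t \<le> \<rho>" "P2 t \<le> \<rho>" "\<bar>W1 t - w1\<bar> \<le> \<rho>" "\<bar>W2 t - w2\<bar> \<le> \<rho>" for t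
    proof -
      have i: "0 \<le> P1 t" "0 \<le> P2 t" using inb[OF that(1)] by auto
      have f1: "u * P2 t + k * W1 t + (b - d) \<le> - \<kappa>"
        by (rule Fneg[OF i(2) that(3) _ k0 rho_k kw1]) (use that(4) in linarith)
      have f2: "u * P1 t + k * W2 t + (b - d) \<le> - \<kappa>"
        by (rule Fneg[OF i(1) that(2) _ k0 rho_k kw2]) (use that(5) in linarith)
      have z1: "\<bar>P1 t - P2 t\<bar> \<le> P1 t + P2 t" "\<bar>P2 t - P1 t\<bar> \<le> P1 t + P2 t" using i by auto
      show ?thesis unfolding pft fst_conv snd_conv L_def
        using clip_neg[OF f1 kp, of "P1 t"] clip_neg[OF f2 kp, of "P2 t"]
          Wbound[OF eps bc z1(1), of "W1 t"] Wbound[OF eps bc z1(2), of "W2 t"] by simp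
    qed
    have x0: "\<bar>P1 0\<bar> < \<delta>" "\<bar>P2 0\<bar> < \<delta>" "\<bar>W1 0 - w1\<bar> < \<delta>" "\<bar>W2 0 - w2\<bar> < \<delta>"
    proof -
      let ?y = "(0, 0, w1, w2) :: state"
      have D: "dist (x 0) ?y < \<delta>" using as by simp
      have "dist (fst (x 0)) (fst ?y) \<le> dist (x 0) ?y" by (rule dist_fst_le)
      then show "\<bar>P1 0\<bar> < \<delta>" using D by (simp add: P1_def dist_real_def)
      have s1: "dist (snd (x 0)) (snd ?y) \<le> dist (x 0) ?y" by (rule dist_snd_le)
      have s2: "dist (snd (snd (x 0))) (snd (snd ?y)) \<le> dist (snd (x 0)) (snd ?y)" by (rule dist_snd_le)
      have "dist (fst (snd (x 0))) (fst (snd ?y)) \<le> dist (snd (x 0)) (snd ?y)" by (rule dist_fst_le)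
      then show "\<bar>P2 0\<bar> < \<delta>" using D s1 by (simp add: P2_def dist_real_def)
      have "dist (fst (snd (snd (x 0)))) (fst (snd (snd ?y))) \<le> dist (snd (snd (x 0))) (snd (snd ?y))" by (rule dist_fst_le)
      then show "\<bar>W1 0 - w1\<bar> < \<delta>" using D s1 s2 by (simp add: W1_def dist_real_def)
      have "dist (snd (snd (snd (x 0)))) (snd (snd (snd ?y))) \<le> dist (snd (snd (x 0))) (snd (snd ?y))" by (rule dist_snd_le)
      then show "\<bar>W2 0 - w2\<bar> < \<delta>" using D s1 s2 by (simp add: W2_def dist_real_def)
    qed
    have S0: "P1 0 + P2 0 \<le> 2 * \<delta>" using x0 by linarith
    have "M * (P1 0 + P2 0) \<le> M * (2 * \<delta>)" using S0 M0 by (simp add: mult_left_mono)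
    then have i1: "(2 * L / \<kappa> + 1) * (P1 0 + P2 0) + \<bar>W1 0 - w1\<bar> < \<rho>"
      and i2: "(2 * L / \<kappa> + 1) * (P1 0 + P2 0) + \<bar>W2 0 - w2\<bar> < \<rho>"
      using dM x0 unfolding M_def by linarith+
    have all: "\<forall>t\<ge>0. P1 t < \<rho> \<and> P2 t < \<rho> \<and> \<bar>W1 t - w1\<bar> < \<rho> \<and> \<bar>W2 t - w2\<bar> < \<rho>"
      by (rule core[OF cP1 cP2 cW1 cW2 dP1 dP2 dW1 dW2 _ _ kp L0 reg i1 i2])
         (use inb in auto)
    then have "P1 t < \<rho>" "P2 t < \<rho>" "\<bar>W1 t - w1\<bar> < \<rho>" "\<bar>W2 t - w2\<bar> < \<rho>" using t by auto
    moreover have "0 \<le> P1 t" "0 \<le> P2 t" using inb[OF t] by auto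
    ultimately have "\<bar>P1 t - 0\<bar> + \<bar>P2 t - 0\<bar> + \<bar>W1 t - w1\<bar> + \<bar>W2 t - w2\<bar> < \<eta>"
      using rho_eta by linarith
    then show "dist (x t) (0, 0, w1, w2) < \<eta>" unfolding xt using dist4 order_le_less_trans by blast
  qed
qed

lemma stable2:
  fixes a b c d eps w1 w2 :: real
  assumes bc: "b < c" and eps: "eps > 0"
    and h1: "(a + d - b - c) + (c - b) / 2 * w1 + b - d > 0" and h2: "(a + d - b - c) + (c - b) / 2 * w2 + b - d > 0"
  shows "sa_stable a b c d eps (1, 1, w1, w2)"
  unfolding sa_stable_def
proof (intro allI impI)
  fix \<eta> :: real assume eta: "\<eta> > 0"
  define k where "k = (c - b) / 2"
  define u where "u = a + d - b - c"
  define \<kappa> where "\<kappa> = min (u + k * w1 + (b - d)) (u + k * w2 + (b - d)) / 2"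
  define \<rho> where "\<rho> = min (\<eta> / 4) (\<kappa> / (\<bar>u\<bar> + k))"
  define L where "L = eps * (c - b) / 2"
  define M where "M = 2 * L / \<kappa> + 1"
  define \<delta> where "\<delta> = \<rho> / (2 * M + 2)"
  have k0: "k > 0" using bc by (simp add: k_def)
  have kp: "\<kappa> > 0" using h1 h2 by (simp add: \<kappa>_def k_def u_def)
  have L0: "L \<ge> 0" using eps bc by (simp add: L_def)
  have "2 * L / \<kappa> \<ge> 0" using L0 kp by simp
  then have M0: "M > 0" unfolding M_def by linarith
  have uk: "\<bar>u\<bar> + k > 0" using k0 by linarith
  have rho0: "\<rho> > 0" using eta kp uk by (simp add: \<rho>_def)
  have rho_eta: "4 * \<rho> \<le> \<eta>" by (simp add: \<rho>_def)
  have rho_k: "(\<bar>u\<bar> + k) * \<rho> \<le> \<kappa>"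
  proof -
    have "\<rho> \<le> \<kappa> / (\<bar>u\<bar> + k)" by (simp add: \<rho>_def)
    then show ?thesis using uk by (simp add: pos_le_divide_eq mult.commute)
  qed
  have kw1: "u + k * w1 + (b - d) \<ge> 2 * \<kappa>" by (simp add: \<kappa>_def)
  have kw2: "u + k * w2 + (b - d) \<ge> 2 * \<kappa>" by (simp add: \<kappa>_def)
  have delta0: "\<delta> > 0" using rho0 M0 by (simp add: \<delta>_def)
  have dM: "M * (2 * \<delta>) + \<delta> < \<rho>"
  proof -
    have "\<delta> * (2 * M + 2) = \<rho>" using M0 by (simp add: \<delta>_def)
    then show ?thesis using delta0 by (simp add: algebra_simps)
  qed
  show "\<exists>\<delta>>0. \<forall>x. sa_trajectory a b c d eps x \<and> dist (x 0) (1, 1, w1, w2) < \<delta> \<longrightarrow>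
          (\<forall>t\<ge>0. dist (x t) (1, 1, w1, w2) < \<eta>)"
  proof (intro exI[of _ \<delta>] conjI allI impI delta0)
    fix x :: "real \<Rightarrow> state" and t :: real
    assume as: "sa_trajectory a b c d eps x \<and> dist (x 0) (1, 1, w1, w2) < \<delta>" and t: "t \<ge> 0"
    define P1 where "P1 t = fst (x t)" for t
    define P2 where "P2 t = fst (snd (x t))" for t
    define W1 where "W1 t = fst (snd (snd (x t)))" for t
    define W2 where "W2 t = snd (snd (snd (x t)))" for t
    define pf where "pf t = sa_PF a b c d eps (x t)" for t
    have xt: "x t = (P1 t, P2 t, W1 t, W2 t)" for t by (simp add: P1_def P2_def W1_def W2_def)
    have box: "\<And>t. t \<ge> 0 \<Longrightarrow> x t \<in> sa_box" and cx: "continuous_on {0..} x"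
      and dx: "\<And>t. t \<ge> 0 \<Longrightarrow> (x has_vector_derivative pf t) (at t within {t..})"
      using as unfolding sa_trajectory_def pf_def by auto
    have inb: "0 \<le> P1 t \<and> P1 t \<le> 1 \<and> 0 \<le> P2 t \<and> P2 t \<le> 1" if "t \<ge> 0" for t
      using box[OF that] unfolding xt sa_box_def by auto
    have pft: "pf t = (clip (P1 t) (u * P2 t + k * W1 t + (b - d)), clip (P2 t) (u * P1 t + k * W2 t + (b - d)),
       clip (W1 t) (eps / 2 * (b - c) * (P1 t - P2 t)), clip (W2 t) (eps / 2 * (b - c) * (P2 t - P1 t)))" for t
      unfolding pf_def xt PF_eq u_def k_def by (simp add: algebra_simps)
    have cP1: "continuous_on {0..} P1" unfolding P1_def by (intro continuous_intros cx)
    have cP2: "continuous_on {0..} P2" unfolding P2_def by (intro continuous_intros cx)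
    have cW1: "continuous_on {0..} W1" unfolding W1_def by (intro continuous_intros cx)
    have cW2: "continuous_on {0..} W2" unfolding W2_def by (intro continuous_intros cx)
    have dP1: "(P1 has_real_derivative fst (pf t)) (at t within {t..})" if "t \<ge> 0" for t
      unfolding P1_def using dx[OF that] by (rule vd_fst)
    have dP2: "(P2 has_real_derivative fst (snd (pf t))) (at t within {t..})" if "t \<ge> 0" for t
      unfolding P2_def using vd_snd[OF dx[OF that]] by (rule vd_fst)
    have dW1: "(W1 has_real_derivative fst (snd (snd (pf t)))) (at t within {t..})" if "t \<ge> 0" for t
      unfolding W1_def using vd_snd[OF vd_snd[OF dx[OF that]]] by (rule vd_fst)
    have dW2: "(W2 has_real_derivative snd (snd (snd (pf t)))) (at t within {t..})" if "t \<ge> 0" for t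
      unfolding W2_def using vd_snd[OF vd_snd[OF dx[OF that]]] by (rule vd_sndr)
    have dQ1: "((\<lambda>t. 1 - P1 t) has_real_derivative - fst (pf t)) (at t within {t..})" if "t \<ge> 0" for t
      using DERIV_diff[OF DERIV_const dP1[OF that]] by simp
    have dQ2: "((\<lambda>t. 1 - P2 t) has_real_derivative - fst (snd (pf t))) (at t within {t..})" if "t \<ge> 0" for t
      using DERIV_diff[OF DERIV_const dP2[OF that]] by simp
    have cQ1: "continuous_on {0..} (\<lambda>t. 1 - P1 t)" by (intro continuous_intros cP1)
    have cQ2: "continuous_on {0..} (\<lambda>t. 1 - P2 t)" by (intro continuous_intros cP2)
    have reg: "- fst (pf t) \<le> 0 \<and> (1 - P1 t > 0 \<longrightarrow> - fst (pf t) \<le> - \<kappa>) \<and>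
        - fst (snd (pf t)) \<le> 0 \<and> (1 - P2 t > 0 \<longrightarrow> - fst (snd (pf t)) \<le> - \<kappa>) \<and>
        \<bar>fst (snd (snd (pf t)))\<bar> \<le> L * ((1 - P1 t) + (1 - P2 t)) \<and> \<bar>snd (snd (snd (pf t)))\<bar> \<le> L * ((1 - P1 t) + (1 - P2 t))"
      if "t \<ge> 0" "1 - P1 t \<le> \<rho>" "1 - P2 t \<le> \<rho>" "\<bar>W1 t - w1\<bar> \<le> \<rho>" "\<bar>W2 t - w2\<bar> \<le> \<rho>" for t
    proof -
      have i: "0 \<le> 1 - P1 t" "0 \<le> 1 - P2 t" "P1 t \<le> 1" "P2 t \<le> 1" using inb[OF that(1)] by auto
      have f1: "u * P2 t + k * W1 t + (b - d) \<ge> \<kappa>"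
        by (rule Fpos[OF i(2) that(3) _ k0 rho_k kw1]) (use that(4) in linarith)
      have f2: "u * P1 t + k * W2 t + (b - d) \<ge> \<kappa>"
        by (rule Fpos[OF i(1) that(2) _ k0 rho_k kw2]) (use that(5) in linarith)
      have z1: "\<bar>P1 t - P2 t\<bar> \<le> (1 - P1 t) + (1 - P2 t)" "\<bar>P2 t - P1 t\<bar> \<le> (1 - P1 t) + (1 - P2 t)" using i by auto
      show ?thesis unfolding pft fst_conv snd_conv L_def
        using clip_pos[OF f1 kp i(3)] clip_pos[OF f2 kp i(4)]
          Wbound[OF eps bc z1(1), of "W1 t"] Wbound[OF eps bc z1(2), of "W2 t"] by simp
    qed
    have x0: "\<bar>P1 0 - 1\<bar> < \<delta>" "\<bar>P2 0 - 1\<bar> < \<delta>" "\<bar>W1 0 - w1\<bar> < \<delta>" "\<bar>W2 0 - w2\<bar> < \<delta>"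
    proof -
      let ?y = "(1, 1, w1, w2) :: state"
      have D: "dist (x 0) ?y < \<delta>" using as by simp
      have "dist (fst (x 0)) (fst ?y) \<le> dist (x 0) ?y" by (rule dist_fst_le)
      then show "\<bar>P1 0 - 1\<bar> < \<delta>" using D by (simp add: P1_def dist_real_def)
      have s1: "dist (snd (x 0)) (snd ?y) \<le> dist (x 0) ?y" by (rule dist_snd_le)
      have s2: "dist (snd (snd (x 0))) (snd (snd ?y)) \<le> dist (snd (x 0)) (snd ?y)" by (rule dist_snd_le)
      have "dist (fst (snd (x 0))) (fst (snd ?y)) \<le> dist (snd (x 0)) (snd ?y)" by (rule dist_fst_le)
      then show "\<bar>P2 0 - 1\<bar> < \<delta>" using D s1 by (simp add: P2_def dist_real_def)
      have "dist (fst (snd (snd (x 0)))) (fst (snd (snd ?y))) \<le> dist (snd (snd (x 0))) (snd (snd ?y))" by (rule dist_fst_le)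
      then show "\<bar>W1 0 - w1\<bar> < \<delta>" using D s1 s2 by (simp add: W1_def dist_real_def)
      have "dist (snd (snd (snd (x 0)))) (snd (snd (snd ?y))) \<le> dist (snd (snd (x 0))) (snd (snd ?y))" by (rule dist_snd_le)
      then show "\<bar>W2 0 - w2\<bar> < \<delta>" using D s1 s2 by (simp add: W2_def dist_real_def)
    qed
    have S0: "(1 - P1 0) + (1 - P2 0) \<le> 2 * \<delta>" using x0 by linarith
    have "M * ((1 - P1 0) + (1 - P2 0)) \<le> M * (2 * \<delta>)" using S0 M0 by (simp add: mult_left_mono)
    then have i1: "(2 * L / \<kappa> + 1) * ((1 - P1 0) + (1 - P2 0)) + \<bar>W1 0 - w1\<bar> < \<rho>"
      and i2: "(2 * L / \<kappa> + 1) * ((1 - P1 0) + (1 - P2 0)) + \<bar>W2 0 - w2\<bar> < \<rho>"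
      using dM x0 unfolding M_def by linarith+
    have all: "\<forall>t\<ge>0. 1 - P1 t < \<rho> \<and> 1 - P2 t < \<rho> \<and> \<bar>W1 t - w1\<bar> < \<rho> \<and> \<bar>W2 t - w2\<bar> < \<rho>"
      by (rule core[OF cQ1 cQ2 cW1 cW2 dQ1 dQ2 dW1 dW2 _ _ kp L0 reg i1 i2])
         (use inb in auto)
    then have "1 - P1 t < \<rho>" "1 - P2 t < \<rho>" "\<bar>W1 t - w1\<bar> < \<rho>" "\<bar>W2 t - w2\<bar> < \<rho>" using t by auto
    moreover have "P1 t \<le> 1" "P2 t \<le> 1" using inb[OF t] by auto
    ultimately have "\<bar>P1 t - 1\<bar> + \<bar>P2 t - 1\<bar> + \<bar>W1 t - w1\<bar> + \<bar>W2 t - w2\<bar> < \<eta>"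
      using rho_eta by linarith
    then show "dist (x t) (1, 1, w1, w2) < \<eta>" unfolding xt using dist4 order_le_less_trans by blast
  qed
qed

theorem corollary1:
  fixes a b c d eps w1 w2 :: real
  assumes pd: "c > a" "a > d" "d > b"
    and eps: "eps > 0"
    and w: "w1 \<in> {0..1}" "w2 \<in> {0..1}"
  shows "(w1 < min (2 * (c - a) / (c - b)) (2 * (d - b) / (c - b)) \<and>
          w2 < min (2 * (c - a) / (c - b)) (2 * (d - b) / (c - b)) \<longrightarrow>
            sa_equilibrium a b c d eps (0, 0, w1, w2) \<and> sa_stable a b c d eps (0, 0, w1, w2))
       \<and> (w1 > max (2 * (c - a) / (c - b)) (2 * (d - b) / (c - b)) \<and>
          w2 > max (2 * (c - a) / (c - b)) (2 * (d - b) / (c - b)) \<longrightarrow>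
            sa_equilibrium a b c d eps (1, 1, w1, w2) \<and> sa_stable a b c d eps (1, 1, w1, w2))"
proof (intro conjI impI)
  have bc: "b < c" using pd by linarith
  have cb: "c - b > 0" using bc by simp
  have lt: "(c - b) / 2 * v + b - d < 0" if "v < 2 * (d - b) / (c - b)" for v
  proof -
    have 1: "v * (c - b) < 2 * (d - b)" using that cb by (simp add: pos_less_divide_eq)
    obtain X where X: "X = v * (c - b)" by simp
    have 2: "(c - b) / 2 * v = X / 2" by (simp add: X)
    show ?thesis unfolding 2 using 1 unfolding X[symmetric] by simp
  qed
  have gt: "(a + d - b - c) + (c - b) / 2 * v + b - d > 0" if "v > 2 * (c - a) / (c - b)" for v
  proof -
    have 1: "v * (c - b) > 2 * (c - a)" using that cb by (simp add: pos_divide_less_eq)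
    obtain X where X: "X = v * (c - b)" by simp
    have 2: "(c - b) / 2 * v = X / 2" by (simp add: X)
    show ?thesis unfolding 2 using 1 unfolding X[symmetric] by simp
  qed
  {
    assume h: "w1 < min (2 * (c - a) / (c - b)) (2 * (d - b) / (c - b)) \<and>
          w2 < min (2 * (c - a) / (c - b)) (2 * (d - b) / (c - b))"
    have h1: "(c - b) / 2 * w1 + b - d < 0" using h lt by simp
    have h2: "(c - b) / 2 * w2 + b - d < 0" using h lt by simp
    show "sa_equilibrium a b c d eps (0, 0, w1, w2)"
      unfolding sa_equilibrium_def sa_box_def PF_eq using w h1 h2
      by (simp add: clip_def zero_prod_def)
    show "sa_stable a b c d eps (0, 0, w1, w2)" by (rule stable1[OF bc eps h1 h2])
  next
    assume h: "w1 > max (2 * (c - a) / (c - b)) (2 * (d - b) / (c - b)) \<and>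
          w2 > max (2 * (c - a) / (c - b)) (2 * (d - b) / (c - b))"
    have h1: "(a + d - b - c) + (c - b) / 2 * w1 + b - d > 0" using h gt by simp
    have h2: "(a + d - b - c) + (c - b) / 2 * w2 + b - d > 0" using h gt by simp
    show "sa_equilibrium a b c d eps (1, 1, w1, w2)"
      unfolding sa_equilibrium_def sa_box_def PF_eq using w h1 h2
      by (simp add: clip_def zero_prod_def)
    show "sa_stable a b c d eps (1, 1, w1, w2)" by (rule stable2[OF bc eps h1 h2])
  }
qed

end
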